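(* Let $G$ be a compact, totally disconnected group and $\alpha$ an automorphism of $G$ such that $(G,\alpha)$ is topologically transitive, and let $N\le G$ be a finite, normal, $\alpha$-stable subgroup. Then $N$ is contained in the centre of $G$.
   Context: $(G,\alpha)$ is topologically transitive if some orbit $\{\alpha^n(x):n\in\mathbb{Z}\}$ is dense in $G$. A subgroup $N$ is $\alpha$-stable if $\alpha(N)=N$. *)

theory Defs
  imports "HOL-Analysis.Analysis" "HOL-Algebra.Algebra"
begin

definition topological_group :: "('a, 'b) monoid_scheme \<Rightarrow> 'a topology \<Rightarrow> bool" where
  "topological_group G T \<longleftrightarrow> group G \<and> topspace T = carrier G \<and>
     continuous_map (prod_topology T T) T (\<lambda>(x, y). x \<otimes>\<^bsub>G\<^esub> y) \<and>
     continuous_map T T (\<lambda>x. inv\<^bsub>G\<^esub> x)"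

definition totally_disconnected_space :: "'a topology \<Rightarrow> bool" where
  "totally_disconnected_space T \<longleftrightarrow>
     (\<forall>S. S \<subseteq> topspace T \<and> connectedin T S \<longrightarrow> (\<exists>a. S \<subseteq> {a}))"

definition top_group_aut :: "('a, 'b) monoid_scheme \<Rightarrow> 'a topology \<Rightarrow> ('a \<Rightarrow> 'a) \<Rightarrow> bool" where
  "top_group_aut G T \<alpha> \<longleftrightarrow> \<alpha> \<in> iso G G \<and> homeomorphic_map T T \<alpha>"

definition aut_pow :: "('a, 'b) monoid_scheme \<Rightarrow> ('a \<Rightarrow> 'a) \<Rightarrow> int \<Rightarrow> 'a \<Rightarrow> 'a" where
  "aut_pow G \<alpha> n = (if 0 \<le> n then \<alpha> ^^ nat n else inv_into (carrier G) \<alpha> ^^ nat (- n))"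

definition topologically_transitive ::
    "('a, 'b) monoid_scheme \<Rightarrow> 'a topology \<Rightarrow> ('a \<Rightarrow> 'a) \<Rightarrow> bool" where
  "topologically_transitive G T \<alpha> \<longleftrightarrow>
     (\<exists>x\<in>carrier G. T closure_of {aut_pow G \<alpha> n x | n. True} = topspace T)"

definition group_center :: "('a, 'b) monoid_scheme \<Rightarrow> 'a set" where
  "group_center G = {z \<in> carrier G. \<forall>g\<in>carrier G. z \<otimes>\<^bsub>G\<^esub> g = g \<otimes>\<^bsub>G\<^esub> z}"

end

theory Submission
  imports Defs
begin

lemma iter_stable:
  assumes "\<forall>y\<in>A. f y \<in> A \<and> (f y \<in> S \<longleftrightarrow> y \<in> S)" "x \<in> A"
  shows "(f ^^ n) x \<in> A \<and> ((f ^^ n) x \<in> S \<longleftrightarrow> x \<in> S)"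
  using assms by (induction n) auto

lemma aut_pow_stable:
  assumes "bij_betw f (carrier G) (carrier G)"
    "\<forall>y\<in>carrier G. f y \<in> S \<longleftrightarrow> y \<in> S" "x \<in> carrier G"
  shows "aut_pow G f k x \<in> carrier G \<and> (aut_pow G f k x \<in> S \<longleftrightarrow> x \<in> S)"
proof (cases "0 \<le> k")
  case True
  have "\<forall>y\<in>carrier G. f y \<in> carrier G \<and> (f y \<in> S \<longleftrightarrow> y \<in> S)"
    using assms(1,2) bij_betwE by blast
  then show ?thesis using True iter_stable[OF _ assms(3)] assms(3) by (simp add: aut_pow_def)
next
  case False
  let ?g = "inv_into (carrier G) f"
  have b: "bij_betw ?g (carrier G) (carrier G)" using assms(1) bij_betw_inv_into by blast
  have "\<forall>y\<in>carrier G. ?g y \<in> carrier G \<and> (?g y \<in> S \<longleftrightarrow> y \<in> S)"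
  proof
    fix y assume y: "y \<in> carrier G"
    have gy: "?g y \<in> carrier G" using b y bij_betwE by blast
    have "f (?g y) = y" using y assms(1) by (simp add: bij_betw_def f_inv_into_f)
    then show "?g y \<in> carrier G \<and> (?g y \<in> S \<longleftrightarrow> y \<in> S)" using gy assms(2) by metis
  qed
  then show ?thesis using False iter_stable[OF _ assms(3)] assms(3) by (simp add: aut_pow_def)
qed

lemma td_closed_sing:
  assumes "totally_disconnected_space T" "x \<in> topspace T"
  shows "closedin T {x}"
proof -
  have c: "connectedin T (T closure_of {x})"
    by (rule connectedin_closure_of) (simp add: assms(2))
  have "T closure_of {x} \<subseteq> topspace T" by (rule closure_of_subset_topspace)
  then have "\<exists>a. T closure_of {x} \<subseteq> {a}"
    using c assms(1) unfolding totally_disconnected_space_def by blast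
  then obtain a where "T closure_of {x} \<subseteq> {a}" by blast
  moreover have "x \<in> T closure_of {x}" using closure_of_subset[of "{x}" T] assms(2) by simp
  ultimately have "T closure_of {x} = {x}" by blast
  then show ?thesis by (rule closure_of_eq[THEN iffD1])
qed

theorem corollary5p13:
  fixes G :: "('a, 'b) monoid_scheme" and T :: "'a topology" and \<alpha> :: "'a \<Rightarrow> 'a"
    and N :: "'a set"
  assumes "topological_group G T"
    and "compact_space T"
    and "totally_disconnected_space T"
    and "top_group_aut G T \<alpha>"
    and "topologically_transitive G T \<alpha>"
    and "subgroup N G" and "finite N" and "N \<lhd> G" and "\<alpha> ` N = N"
  shows "N \<subseteq> group_center G"
proof -
  have grp: "group G" and top: "topspace T = carrier G"
    and mc: "continuous_map (prod_topology T T) T (\<lambda>(x, y). x \<otimes>\<^bsub>G\<^esub> y)"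
    and ic: "continuous_map T T (\<lambda>x. inv\<^bsub>G\<^esub> x)"
    using assms(1) unfolding topological_group_def by auto
  have iso: "\<alpha> \<in> iso G G" using assms(4) unfolding top_group_aut_def by auto
  have hom_all: "\<alpha> \<in> hom G G \<and> \<alpha> ` carrier G = carrier G \<and> inj_on \<alpha> (carrier G)"
    using iso by (simp only: iso_iff)
  have hom: "\<alpha> \<in> hom G G" and inj: "inj_on \<alpha> (carrier G)" and surj: "\<alpha> ` carrier G = carrier G"
    using hom_all by auto
  have bij: "bij_betw \<alpha> (carrier G) (carrier G)" using inj surj by (simp add: bij_betw_def)
  have Nsub: "N \<subseteq> carrier G" using assms(6) subgroup.subset by blast
  define C where "C = {g \<in> carrier G. \<forall>m\<in>N. g \<otimes>\<^bsub>G\<^esub> m = m \<otimes>\<^bsub>G\<^esub> g}"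
  define h where "h m g = g \<otimes>\<^bsub>G\<^esub> m \<otimes>\<^bsub>G\<^esub> inv\<^bsub>G\<^esub> g" for m g
  have hc: "continuous_map T T (h m)" if m: "m \<in> carrier G" for m
  proof -
    have cm: "continuous_map T T (\<lambda>g. m)" using m top by simp
    have p1: "continuous_map T (prod_topology T T) (\<lambda>g. (g, m))"
      using cm by (simp add: continuous_map_pairwise o_def)
    have c1: "continuous_map T T (\<lambda>g. g \<otimes>\<^bsub>G\<^esub> m)"
      using continuous_map_compose[OF p1 mc] by (simp add: o_def)
    have p2: "continuous_map T (prod_topology T T) (\<lambda>g. (g \<otimes>\<^bsub>G\<^esub> m, inv\<^bsub>G\<^esub> g))"
      using c1 ic by (simp add: continuous_map_pairwise o_def)
    have "h m = (\<lambda>g. g \<otimes>\<^bsub>G\<^esub> m \<otimes>\<^bsub>G\<^esub> inv\<^bsub>G\<^esub> g)" by (rule ext) (simp add: h_def)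
    then show ?thesis using continuous_map_compose[OF p2 mc] by (simp add: o_def)
  qed
  have hN: "h m g \<in> N" if "m \<in> N" "g \<in> carrier G" for m g
    using that assms(8) normal.inv_op_closed2 h_def by metis
  have Ceq: "C = (\<Inter>m\<in>N. {g \<in> topspace T. h m g \<in> {m}}) \<inter> carrier G"
  proof -
    have "g \<otimes>\<^bsub>G\<^esub> m = m \<otimes>\<^bsub>G\<^esub> g \<longleftrightarrow> h m g = m" if "m \<in> carrier G" "g \<in> carrier G" for m g
    proof -
      have gm: "g \<otimes>\<^bsub>G\<^esub> m \<in> carrier G" using that grp by (simp add: group.is_monoid monoid.m_closed)
      show ?thesis unfolding h_def using group.inv_solve_right'[OF grp that(1) gm that(2)] by simp
    qed
    then have "\<forall>g\<in>carrier G. (\<forall>m\<in>N. g \<otimes>\<^bsub>G\<^esub> m = m \<otimes>\<^bsub>G\<^esub> g) \<longleftrightarrow> (\<forall>m\<in>N. h m g = m)"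
      using Nsub by blast
    then show ?thesis unfolding C_def using top by auto
  qed
  have closedF: "closedin T {g \<in> topspace T. h m g \<in> {m'}}" if "m \<in> N" "m' \<in> N" for m m'
    using closedin_continuous_map_preimage[OF hc td_closed_sing[OF assms(3)]] that Nsub top by auto
  have openF: "openin T {g \<in> topspace T. h m g \<in> {m}}" if m: "m \<in> N" for m
  proof -
    have "topspace T - {g \<in> topspace T. h m g \<in> {m}} = (\<Union>m'\<in>N - {m}. {g \<in> topspace T. h m g \<in> {m'}})"
      using hN m top by auto
    moreover have "closedin T (\<Union>m'\<in>N - {m}. {g \<in> topspace T. h m g \<in> {m'}})"
      using closedF m assms(7) by (intro closedin_Union) auto
    ultimately show ?thesis unfolding openin_closedin_eq by auto
  qed
  have Copen: "openin T C"
  proof (cases "N = {}")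
    case True
    then have "C = topspace T" unfolding C_def using top by simp
    then show ?thesis by simp
  next
    case False
    have "C = (\<Inter>m\<in>N. {g \<in> topspace T. h m g \<in> {m}})" using Ceq False top by auto
    then show ?thesis using openF assms(7) False by (auto intro: openin_Inter)
  qed
  have Cclosed: "closedin T C"
  proof (cases "N = {}")
    case True
    then have "C = topspace T" unfolding C_def using top by simp
    then show ?thesis by simp
  next
    case False
    have "C = (\<Inter>m\<in>N. {g \<in> topspace T. h m g \<in> {m}})" using Ceq False top by auto
    then show ?thesis using closedF False by (auto intro: closedin_Inter)
  qed
  have stab: "\<forall>y\<in>carrier G. \<alpha> y \<in> C \<longleftrightarrow> y \<in> C"
  proof
    fix y assume y: "y \<in> carrier G"
    have ay: "\<alpha> y \<in> carrier G" using y hom by (simp add: hom_in_carrier)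
    have "(\<forall>m\<in>N. \<alpha> y \<otimes>\<^bsub>G\<^esub> m = m \<otimes>\<^bsub>G\<^esub> \<alpha> y) \<longleftrightarrow> (\<forall>m\<in>N. y \<otimes>\<^bsub>G\<^esub> m = m \<otimes>\<^bsub>G\<^esub> y)"
    proof -
      have "(\<alpha> y \<otimes>\<^bsub>G\<^esub> \<alpha> m = \<alpha> m \<otimes>\<^bsub>G\<^esub> \<alpha> y) \<longleftrightarrow> (y \<otimes>\<^bsub>G\<^esub> m = m \<otimes>\<^bsub>G\<^esub> y)" if m: "m \<in> N" for m
      proof -
        have mG: "m \<in> carrier G" using m Nsub by auto
        have "\<alpha> y \<otimes>\<^bsub>G\<^esub> \<alpha> m = \<alpha> (y \<otimes>\<^bsub>G\<^esub> m)" "\<alpha> m \<otimes>\<^bsub>G\<^esub> \<alpha> y = \<alpha> (m \<otimes>\<^bsub>G\<^esub> y)"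
          using hom y mG by (simp_all add: hom_mult)
        moreover have "y \<otimes>\<^bsub>G\<^esub> m \<in> carrier G" "m \<otimes>\<^bsub>G\<^esub> y \<in> carrier G"
          using y mG grp by (simp_all add: group.is_monoid monoid.m_closed)
        ultimately show ?thesis using inj by (metis inj_onD)
      qed
      moreover have "(\<forall>m\<in>\<alpha> ` N. \<alpha> y \<otimes>\<^bsub>G\<^esub> m = m \<otimes>\<^bsub>G\<^esub> \<alpha> y) \<longleftrightarrow> (\<forall>m\<in>N. \<alpha> y \<otimes>\<^bsub>G\<^esub> \<alpha> m = \<alpha> m \<otimes>\<^bsub>G\<^esub> \<alpha> y)" by simp
      ultimately show ?thesis using assms(9) by simp
    qed
    then show "\<alpha> y \<in> C \<longleftrightarrow> y \<in> C" unfolding C_def using y ay by auto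
  qed
  obtain x where x: "x \<in> carrier G" and dense: "T closure_of {aut_pow G \<alpha> n x | n. True} = topspace T"
    using assms(5) unfolding topologically_transitive_def by blast
  let ?O = "{aut_pow G \<alpha> n x | n. True}"
  have Oc: "?O \<subseteq> carrier G" using aut_pow_stable[OF bij stab x] by auto
  have OC: "\<forall>z\<in>?O. z \<in> C \<longleftrightarrow> x \<in> C" using aut_pow_stable[OF bij stab x] by auto
  have "carrier G \<subseteq> C"
  proof (cases "x \<in> C")
    case True
    then have "?O \<subseteq> C" using OC by blast
    then have "T closure_of ?O \<subseteq> C" using Cclosed closure_of_minimal by blast
    then show ?thesis using dense top by simp
  next
    case False
    then have "?O \<subseteq> topspace T - C" using OC Oc top by blast
    then have "T closure_of ?O \<subseteq> topspace T - C" using Copen closure_of_minimal by blast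
    moreover have "\<one>\<^bsub>G\<^esub> \<in> C" unfolding C_def using grp Nsub
      by (auto simp: group.is_monoid monoid.one_closed monoid.l_one monoid.r_one subsetD)
    moreover have "\<one>\<^bsub>G\<^esub> \<in> topspace T" using top grp by (simp add: group.is_monoid monoid.one_closed)
    ultimately have False using dense by blast
    then show ?thesis ..
  qed
  show ?thesis
  proof
    fix z assume z: "z \<in> N"
    have "\<forall>g\<in>carrier G. z \<otimes>\<^bsub>G\<^esub> g = g \<otimes>\<^bsub>G\<^esub> z"
    proof
      fix g assume "g \<in> carrier G"
      then have "g \<in> C" using \<open>carrier G \<subseteq> C\<close> by blast
      then show "z \<otimes>\<^bsub>G\<^esub> g = g \<otimes>\<^bsub>G\<^esub> z" using z unfolding C_def by simp
    qed
    then show "z \<in> group_center G" unfolding group_center_def using z Nsub by blast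
  qed
qed

end
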